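(* Let $A$ be the filtered boundary matrix of a Morse decomposition with respect to an admissible enumeration $\sigma_1,\dots,\sigma_n$, let $A_{out}$ be the matrix obtained after the reduction phase of ConMat, and let $\bar A$ be any complete column reduction of $A_{out}$. Then for every $j$, column $j$ is homogeneous in $A_{out}$ if and only if column $j$ is homogeneous in $\bar A$.
   Context: $K$ is a finite simplicial complex ($\tau\le\sigma$: $\tau$ is a face of $\sigma$; $\mathrm{cl}(\sigma)=\{\tau:\tau\le\sigma\}$). A multivector field $\mathcal V$ on $K$ is a partition of $K$ into convex sets $V$ (if $\sigma,\tau\in V$ and $\sigma\le\mu\le\tau$ then $\mu\in V$); $[\sigma]_{\mathcal V}$ is the part containing $\sigma$, $F_{\mathcal V}(\sigma)=[\sigma]_{\mathcal V}\cup\mathrm{cl}(\sigma)$, and a path is a sequence $\sigma_1,\dots,\sigma_r$ with $\sigma_k\in F_{\mathcal V}(\sigma_{k-1})$. A Morse decomposition indexed by a finite poset $(P,\le_P)$ is a partition $K=\bigsqcup_{p\in P}M_p$ such that every path from $M_p$ to $M_q$ has $q\le_P p$; $[\sigma]_P$ is the $p$ with $\sigma\in M_p$. An admissible enumeration is $\sigma_1,\dots,\sigma_n$ of all simplices of $K$ such that (a) for some linear extension $\le_{lin}$ of $\le_P$, $i\le j\Rightarrow[\sigma_i]_P\le_{lin}[\sigma_j]_P$; (b) if $\sigma_i$ is a proper face of $\sigma_j$ then $i<j$. The filtered boundary matrix $A$ is the $n\times n$ $\mathbb Z_2$-matrix with $A[i,j]=1$ iff $\sigma_i$ is a codimension-one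 face of $\sigma_j$; row/column $i$ represents $\sigma_i$ (in all matrices derived from $A$ by column additions). For a nonzero column $j$ of a matrix $B$, $\mathrm{low}_B(j)$ is the largest $i$ with $B[i,j]=1$. Column $j$ is homogeneous in $B$ if it is nonzero and $\sigma_j$, $\sigma_{\mathrm{low}_B(j)}$ lie in the same Morse set. ConMat reduction phase on $A$ (in place): for $j=1,\dots,n$: for $i=\mathrm{low}_A(j)$ down to $1$: if $A[i,j]=1$ and some column $s<j$ of the current matrix is homogeneous with $\mathrm{low}_A(s)=i$, add column $s$ to column $j$ (mod 2). $A_{out}$ is the result. A complete column reduction of a matrix $B$ is a matrix $\bar B$ obtained from $B$ by a finite sequence of additions of a column $s$ to a column $j$ with $s<j$ (no homogeneity restriction) such that distinct nonzero columns of $\bar B$ have distinct values of $\mathrm{low}$. *)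

theory Defs
  imports Main
begin

definition simplicial_complex :: "'v set set \<Rightarrow> bool" where
  "simplicial_complex K \<longleftrightarrow> finite K \<and> (\<forall>\<sigma>\<in>K. finite \<sigma> \<and> \<sigma> \<noteq> {}) \<and>
     (\<forall>\<sigma>\<in>K. \<forall>\<tau>. \<tau> \<noteq> {} \<and> \<tau> \<subseteq> \<sigma> \<longrightarrow> \<tau> \<in> K)"

definition cl :: "'v set set \<Rightarrow> 'v set \<Rightarrow> 'v set set" where
  "cl K \<sigma> = {\<tau>\<in>K. \<tau> \<subseteq> \<sigma>}"

definition codim1_face :: "'v set \<Rightarrow> 'v set \<Rightarrow> bool" where
  "codim1_face \<tau> \<sigma> \<longleftrightarrow> \<tau> \<subseteq> \<sigma> \<and> card \<sigma> = card \<tau> + 1"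

definition convex_in :: "'v set set \<Rightarrow> 'v set set \<Rightarrow> bool" where
  "convex_in K V \<longleftrightarrow> (\<forall>\<sigma>\<in>V. \<forall>\<tau>\<in>V. \<forall>\<mu>\<in>K. \<sigma> \<subseteq> \<mu> \<and> \<mu> \<subseteq> \<tau> \<longrightarrow> \<mu> \<in> V)"

definition multivector_field :: "'v set set \<Rightarrow> 'v set set set \<Rightarrow> bool" where
  "multivector_field K \<V> \<longleftrightarrow>
     (\<forall>V\<in>\<V>. V \<noteq> {} \<and> V \<subseteq> K \<and> convex_in K V) \<and> \<Union>\<V> = K \<and>
     (\<forall>V\<in>\<V>. \<forall>W\<in>\<V>. V \<noteq> W \<longrightarrow> V \<inter> W = {})"

definition mv_class :: "'v set set set \<Rightarrow> 'v set \<Rightarrow> 'v set set" where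
  "mv_class \<V> \<sigma> = (THE V. V \<in> \<V> \<and> \<sigma> \<in> V)"

definition F_mv :: "'v set set \<Rightarrow> 'v set set set \<Rightarrow> 'v set \<Rightarrow> 'v set set" where
  "F_mv K \<V> \<sigma> = mv_class \<V> \<sigma> \<union> cl K \<sigma>"

definition mv_path :: "'v set set \<Rightarrow> 'v set set set \<Rightarrow> 'v set list \<Rightarrow> bool" where
  "mv_path K \<V> xs \<longleftrightarrow> xs \<noteq> [] \<and> set xs \<subseteq> K \<and>
     (\<forall>k. Suc k < length xs \<longrightarrow> xs ! Suc k \<in> F_mv K \<V> (xs ! k))"

definition partial_order_on' :: "'p set \<Rightarrow> ('p \<Rightarrow> 'p \<Rightarrow> bool) \<Rightarrow> bool" where
  "partial_order_on' P le \<longleftrightarrow> (\<forall>p\<in>P. le p p) \<and>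
     (\<forall>p\<in>P. \<forall>q\<in>P. le p q \<and> le q p \<longrightarrow> p = q) \<and>
     (\<forall>p\<in>P. \<forall>q\<in>P. \<forall>r\<in>P. le p q \<and> le q r \<longrightarrow> le p r)"

definition linear_extension :: "'p set \<Rightarrow> ('p \<Rightarrow> 'p \<Rightarrow> bool) \<Rightarrow> ('p \<Rightarrow> 'p \<Rightarrow> bool) \<Rightarrow> bool" where
  "linear_extension P le lin \<longleftrightarrow> partial_order_on' P lin \<and>
     (\<forall>p\<in>P. \<forall>q\<in>P. lin p q \<or> lin q p) \<and> (\<forall>p\<in>P. \<forall>q\<in>P. le p q \<longrightarrow> lin p q)"

definition morse_decomposition ::
  "'v set set \<Rightarrow> 'v set set set \<Rightarrow> 'p set \<Rightarrow> ('p \<Rightarrow> 'p \<Rightarrow> bool) \<Rightarrow> ('p \<Rightarrow> 'v set set) \<Rightarrow> bool" where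
  "morse_decomposition K \<V> P le M \<longleftrightarrow>
     finite P \<and> partial_order_on' P le \<and>
     (\<forall>p\<in>P. M p \<subseteq> K) \<and> (\<Union>p\<in>P. M p) = K \<and>
     (\<forall>p\<in>P. \<forall>q\<in>P. p \<noteq> q \<longrightarrow> M p \<inter> M q = {}) \<and>
     (\<forall>xs p q. mv_path K \<V> xs \<and> p \<in> P \<and> q \<in> P \<and> hd xs \<in> M p \<and> last xs \<in> M q \<longrightarrow> le q p)"

definition admissible_enumeration ::
  "'v set set \<Rightarrow> 'p set \<Rightarrow> ('p \<Rightarrow> 'p \<Rightarrow> bool) \<Rightarrow> ('p \<Rightarrow> 'v set set) \<Rightarrow> nat \<Rightarrow> (nat \<Rightarrow> 'v set) \<Rightarrow> bool" where
  "admissible_enumeration K P le M n \<sigma> \<longleftrightarrow>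
     bij_betw \<sigma> {1..n} K \<and>
     (\<exists>lin. linear_extension P le lin \<and>
        (\<forall>i\<in>{1..n}. \<forall>j\<in>{1..n}. \<forall>p\<in>P. \<forall>q\<in>P.
            i \<le> j \<and> \<sigma> i \<in> M p \<and> \<sigma> j \<in> M q \<longrightarrow> lin p q)) \<and>
     (\<forall>i\<in>{1..n}. \<forall>j\<in>{1..n}. \<sigma> i \<subset> \<sigma> j \<longrightarrow> i < j)"

text \<open>An n x n matrix over Z2 is a function nat => nat => bool, with rows/columns
  indexed by 1..n (entries outside are False for all matrices considered).\<close>
type_synonym z2mat = "nat \<Rightarrow> nat \<Rightarrow> bool"

definition boundary_matrix :: "nat \<Rightarrow> (nat \<Rightarrow> 'v set) \<Rightarrow> z2mat" where
  "boundary_matrix n \<sigma> = (\<lambda>i j. i \<in> {1..n} \<and> j \<in> {1..n} \<and> codim1_face (\<sigma> i) (\<sigma> j))"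

definition nonzero_col :: "nat \<Rightarrow> z2mat \<Rightarrow> nat \<Rightarrow> bool" where
  "nonzero_col n B j \<longleftrightarrow> (\<exists>i\<in>{1..n}. B i j)"

text \<open>low of a nonzero column; (arbitrarily) 0 for a zero column.\<close>
definition low :: "nat \<Rightarrow> z2mat \<Rightarrow> nat \<Rightarrow> nat" where
  "low n B j = (if nonzero_col n B j then Max {i\<in>{1..n}. B i j} else 0)"

definition homogeneous ::
  "nat \<Rightarrow> (nat \<Rightarrow> 'v set) \<Rightarrow> 'p set \<Rightarrow> ('p \<Rightarrow> 'v set set) \<Rightarrow> z2mat \<Rightarrow> nat \<Rightarrow> bool" where
  "homogeneous n \<sigma> P M B j \<longleftrightarrow> nonzero_col n B j \<and>
     (\<exists>p\<in>P. \<sigma> j \<in> M p \<and> \<sigma> (low n B j) \<in> M p)"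

definition add_col :: "z2mat \<Rightarrow> nat \<Rightarrow> nat \<Rightarrow> z2mat" where
  "add_col B s j = (\<lambda>i k. if k = j then (B i j \<noteq> B i s) else B i k)"

text \<open>Inner loop for column j: rows i, i-1, ..., 1. The choice of the column s is
  left nondeterministic ("some column s"); every possible run is covered.\<close>
inductive conmat_inner ::
  "nat \<Rightarrow> (nat \<Rightarrow> 'v set) \<Rightarrow> 'p set \<Rightarrow> ('p \<Rightarrow> 'v set set) \<Rightarrow> nat \<Rightarrow> z2mat \<Rightarrow> nat \<Rightarrow> z2mat \<Rightarrow> bool"
  for n \<sigma> P M j where
  row0: "conmat_inner n \<sigma> P M j B 0 B"
| skip: "\<not> (B (Suc i) j \<and> (\<exists>s. 1 \<le> s \<and> s < j \<and> homogeneous n \<sigma> P M B s \<and> low n B s = Suc i))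
         \<Longrightarrow> conmat_inner n \<sigma> P M j B i B' \<Longrightarrow> conmat_inner n \<sigma> P M j B (Suc i) B'"
| add: "B (Suc i) j \<Longrightarrow> 1 \<le> s \<Longrightarrow> s < j \<Longrightarrow> homogeneous n \<sigma> P M B s \<Longrightarrow> low n B s = Suc i
         \<Longrightarrow> conmat_inner n \<sigma> P M j (add_col B s j) i B' \<Longrightarrow> conmat_inner n \<sigma> P M j B (Suc i) B'"

inductive conmat_outer ::
  "nat \<Rightarrow> (nat \<Rightarrow> 'v set) \<Rightarrow> 'p set \<Rightarrow> ('p \<Rightarrow> 'v set set) \<Rightarrow> z2mat \<Rightarrow> nat \<Rightarrow> z2mat \<Rightarrow> bool"
  for n \<sigma> P M where
  finished: "n < j \<Longrightarrow> conmat_outer n \<sigma> P M B j B"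
| process: "j \<le> n \<Longrightarrow> conmat_inner n \<sigma> P M j B (low n B j) B1 \<Longrightarrow> conmat_outer n \<sigma> P M B1 (Suc j) B'
         \<Longrightarrow> conmat_outer n \<sigma> P M B j B'"

definition conmat_reduction ::
  "nat \<Rightarrow> (nat \<Rightarrow> 'v set) \<Rightarrow> 'p set \<Rightarrow> ('p \<Rightarrow> 'v set set) \<Rightarrow> z2mat \<Rightarrow> z2mat \<Rightarrow> bool" where
  "conmat_reduction n \<sigma> P M A Aout \<longleftrightarrow> conmat_outer n \<sigma> P M A 1 Aout"

definition col_add_step :: "nat \<Rightarrow> z2mat \<Rightarrow> z2mat \<Rightarrow> bool" where
  "col_add_step n B B' \<longleftrightarrow> (\<exists>s j. 1 \<le> s \<and> s < j \<and> j \<le> n \<and> B' = add_col B s j)"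

definition reduced :: "nat \<Rightarrow> z2mat \<Rightarrow> bool" where
  "reduced n B \<longleftrightarrow> (\<forall>j\<in>{1..n}. \<forall>k\<in>{1..n}. j \<noteq> k \<and> nonzero_col n B j \<and> nonzero_col n B k
      \<longrightarrow> low n B j \<noteq> low n B k)"

definition complete_column_reduction :: "nat \<Rightarrow> z2mat \<Rightarrow> z2mat \<Rightarrow> bool" where
  "complete_column_reduction n B Bbar \<longleftrightarrow> (col_add_step n)\<^sup>*\<^sup>* B Bbar \<and> reduced n Bbar"

end

theory Submission
  imports Defs
begin

definition same :: "(nat \<Rightarrow> 'v set) \<Rightarrow> 'p set \<Rightarrow> ('p \<Rightarrow> 'v set set) \<Rightarrow> nat \<Rightarrow> nat \<Rightarrow> bool" where
  "same \<sigma> P M i k = (\<exists>p\<in>P. \<sigma> i \<in> M p \<and> \<sigma> k \<in> M p)"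

lemma parity_symdiff:
  assumes "finite A" "finite B"
  shows "odd (card {t \<in> (A - B) \<union> (B - A). Q t}) = (odd (card {t\<in>A. Q t}) \<noteq> odd (card {t\<in>B. Q t}))"
proof -
  define FA where "FA = {t\<in>A. Q t}"
  define FB where "FB = {t\<in>B. Q t}"
  have fin: "finite FA" "finite FB" using assms by (auto simp: FA_def FB_def)
  have eq: "{t \<in> (A - B) \<union> (B - A). Q t} = (FA - FB) \<union> (FB - FA)" by (auto simp: FA_def FB_def)
  have c: "card ((FA - FB) \<union> (FB - FA)) = card (FA - FB) + card (FB - FA)"
    by (rule card_Un_disjoint) (use fin in auto)
  have c1: "card (FA - FB) = card FA - card (FA \<inter> FB)" by (simp add: card_Diff_subset_Int fin)
  have c2: "card (FB - FA) = card FB - card (FA \<inter> FB)"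
    by (metis Int_commute card_Diff_subset_Int fin finite_Int)
  have l1: "card (FA \<inter> FB) \<le> card FA" by (simp add: card_mono fin)
  have l2: "card (FA \<inter> FB) \<le> card FB" by (simp add: card_mono fin)
  show ?thesis unfolding eq c c1 c2 FA_def[symmetric] FB_def[symmetric]
    using l1 l2 by presburger
qed

locale msetup =
  fixes n :: nat and \<sigma> :: "nat \<Rightarrow> 'v set" and P :: "'p set" and M :: "'p \<Rightarrow> 'v set set"
  assumes cover: "1 \<le> i \<Longrightarrow> i \<le> n \<Longrightarrow> \<exists>p\<in>P. \<sigma> i \<in> M p"
  and disj: "p\<in>P \<Longrightarrow> q\<in>P \<Longrightarrow> p \<noteq> q \<Longrightarrow> M p \<inter> M q = {}"
  and conv: "i \<le> m \<Longrightarrow> m \<le> k \<Longrightarrow> 1 \<le> i \<Longrightarrow> k \<le> n \<Longrightarrow> same \<sigma> P M i k \<Longrightarrow> same \<sigma> P M m k"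
begin

abbreviation "sm \<equiv> same \<sigma> P M"
abbreviation "hom \<equiv> homogeneous n \<sigma> P M"

definition wfm :: "z2mat \<Rightarrow> bool" where
  "wfm B = (\<forall>x k. B x k \<longrightarrow> 1 \<le> x \<and> x < k \<and> k \<le> n)"

definition dg :: "z2mat \<Rightarrow> nat \<Rightarrow> nat \<Rightarrow> bool" where
  "dg B k x = (B x k \<and> sm x k)"

lemma sm_refl: "1 \<le> i \<Longrightarrow> i \<le> n \<Longrightarrow> sm i i"
  using cover by (auto simp: same_def)

lemma sm_sym: "sm i k \<Longrightarrow> sm k i"
  by (auto simp: same_def)

lemma sm_trans: "sm a b \<Longrightarrow> sm b c \<Longrightarrow> sm a c"
  unfolding same_def using disj by blast

lemma hom_alt: "hom B k = (nonzero_col n B k \<and> sm (low n B k) k)"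
  by (auto simp: homogeneous_def same_def)

lemma low_props:
  assumes "nonzero_col n B k"
  shows "B (low n B k) k \<and> 1 \<le> low n B k \<and> low n B k \<le> n \<and> (\<forall>x. 1 \<le> x \<longrightarrow> x \<le> n \<longrightarrow> B x k \<longrightarrow> x \<le> low n B k)"
proof -
  have ne: "{i\<in>{1..n}. B i k} \<noteq> {}" using assms by (auto simp: nonzero_col_def)
  have f: "finite {i\<in>{1..n}. B i k}" by simp
  have "Max {i\<in>{1..n}. B i k} \<in> {i\<in>{1..n}. B i k}" using Max_in[OF f ne] .
  moreover have "\<forall>x. 1 \<le> x \<longrightarrow> x \<le> n \<longrightarrow> B x k \<longrightarrow> x \<le> Max {i\<in>{1..n}. B i k}"
    using Max_ge[OF f] by auto
  ultimately show ?thesis using assms by (auto simp: low_def)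
qed

lemma wfm_entry_nz: "wfm B \<Longrightarrow> B x k \<Longrightarrow> nonzero_col n B k \<and> x \<le> low n B k"
proof -
  assume w: "wfm B" and b: "B x k"
  then have "1 \<le> x" "x \<le> n" unfolding wfm_def by fastforce+
  then have nz: "nonzero_col n B k" using b by (auto simp: nonzero_col_def)
  then show ?thesis using low_props[OF nz] b \<open>1 \<le> x\<close> \<open>x \<le> n\<close> by blast
qed

lemma hom_iff: "wfm B \<Longrightarrow> hom B k = (\<exists>x. dg B k x)"
proof
  assume w: "wfm B" and h: "hom B k"
  then have "nonzero_col n B k" "sm (low n B k) k" by (auto simp: hom_alt)
  then show "\<exists>x. dg B k x" using low_props by (auto simp: dg_def)
next
  assume w: "wfm B" and "\<exists>x. dg B k x"
  then obtain x where b: "B x k" and s: "sm x k" by (auto simp: dg_def)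
  from wfm_entry_nz[OF w b] have nz: "nonzero_col n B k" and xl: "x \<le> low n B k" by auto
  have "B (low n B k) k" using low_props[OF nz] by auto
  then have "low n B k < k" "1 \<le> x" "k \<le> n" using w b unfolding wfm_def by auto
  then have "sm (low n B k) k" using conv[OF xl _ _ _ s] by auto
  then show "hom B k" using nz by (auto simp: hom_alt)
qed

lemma hom_low: "wfm B \<Longrightarrow> hom B k \<Longrightarrow> dg B k (low n B k) \<and> (\<forall>x. dg B k x \<longrightarrow> x \<le> low n B k)"
  using low_props wfm_entry_nz by (auto simp: hom_alt dg_def)

lemma col_eq: "(\<forall>x. B x k = B' x k) \<Longrightarrow> hom B k = hom B' k \<and> low n B k = low n B' k"
proof -
  assume e: "\<forall>x. B x k = B' x k"
  have "nonzero_col n B k = nonzero_col n B' k" using e by (simp add: nonzero_col_def)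
  moreover have "low n B k = low n B' k" using e by (simp add: low_def nonzero_col_def)
  ultimately show ?thesis by (simp add: homogeneous_def)
qed

lemma wfm_add: "wfm B \<Longrightarrow> 1 \<le> s \<Longrightarrow> s < j \<Longrightarrow> j \<le> n \<Longrightarrow> wfm (add_col B s j)"
  unfolding wfm_def add_col_def by (metis order.strict_trans)

lemma inner:
  "conmat_inner n \<sigma> P M j B i B' \<Longrightarrow> wfm B \<Longrightarrow> j \<le> n \<Longrightarrow>
    wfm B' \<and> (\<forall>x k. k \<noteq> j \<longrightarrow> B' x k = B x k) \<and> (\<forall>x. i < x \<longrightarrow> B' x j = B x j) \<and>
    (\<forall>x. 1 \<le> x \<longrightarrow> x \<le> i \<longrightarrow> B' x j \<longrightarrow> \<not>(\<exists>s. 1 \<le> s \<and> s < j \<and> hom B' s \<and> low n B' s = x))"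
proof (induction rule: conmat_inner.induct)
  case (row0 B)
  then show ?case by auto
next
  case (skip B i B')
  then have IH: "wfm B'" "\<forall>x k. k \<noteq> j \<longrightarrow> B' x k = B x k" "\<forall>x. i < x \<longrightarrow> B' x j = B x j"
    "\<forall>x. 1 \<le> x \<longrightarrow> x \<le> i \<longrightarrow> B' x j \<longrightarrow> \<not>(\<exists>s. 1 \<le> s \<and> s < j \<and> hom B' s \<and> low n B' s = x)"
    by auto
  have ce: "s < j \<Longrightarrow> hom B' s = hom B s \<and> low n B' s = low n B s" for s
    using col_eq[of B' s B] IH(2) by auto
  show ?case
  proof (intro conjI allI impI)
    fix x assume "1 \<le> x" "x \<le> Suc i" "B' x j"
    show "\<not>(\<exists>s. 1 \<le> s \<and> s < j \<and> hom B' s \<and> low n B' s = x)"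
    proof (cases "x = Suc i")
      case True
      then have "B (Suc i) j" using IH(3) \<open>B' x j\<close> by auto
      then show ?thesis using skip.hyps(1) ce True by auto
    next
      case False
      then show ?thesis using IH(4) \<open>1 \<le> x\<close> \<open>x \<le> Suc i\<close> \<open>B' x j\<close> by auto
    qed
  qed (use IH in auto)
next
  case (add B i s B')
  have w1: "wfm (add_col B s j)" using wfm_add add by auto
  then have IH: "wfm B'" "\<forall>x k. k \<noteq> j \<longrightarrow> B' x k = add_col B s j x k" "\<forall>x. i < x \<longrightarrow> B' x j = add_col B s j x j"
    "\<forall>x. 1 \<le> x \<longrightarrow> x \<le> i \<longrightarrow> B' x j \<longrightarrow> \<not>(\<exists>s. 1 \<le> s \<and> s < j \<and> hom B' s \<and> low n B' s = x)"
    using add by auto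
  have nz: "nonzero_col n B s" using add.hyps(4) by (auto simp: homogeneous_def)
  have bs: "B (Suc i) s" using low_props[OF nz] add.hyps(5) by auto
  have big: "Suc i < x \<Longrightarrow> \<not> B x s" for x
    using wfm_entry_nz[OF add.prems(1), of x s] add.hyps(5) by auto
  show ?case
  proof (intro conjI allI impI)
    fix x assume "1 \<le> x" "x \<le> Suc i" "B' x j"
    show "\<not>(\<exists>s. 1 \<le> s \<and> s < j \<and> hom B' s \<and> low n B' s = x)"
    proof (cases "x = Suc i")
      case True
      then have "add_col B s j (Suc i) j" using IH(3) \<open>B' x j\<close> by auto
      then show ?thesis using add.hyps(1) bs by (auto simp: add_col_def)
    next
      case False
      then show ?thesis using IH(4) \<open>1 \<le> x\<close> \<open>x \<le> Suc i\<close> \<open>B' x j\<close> by auto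
    qed
  next
    fix x k assume "k \<noteq> j" then show "B' x k = B x k" using IH(2) by (auto simp: add_col_def)
  next
    fix x assume "Suc i < x" then show "B' x j = B x j" using IH(3) big by (auto simp: add_col_def)
  qed (use IH in auto)
qed

definition G :: "z2mat \<Rightarrow> nat \<Rightarrow> bool" where
  "G B k = (\<forall>x. B x k \<longrightarrow> \<not>(\<exists>s. 1 \<le> s \<and> s < k \<and> hom B s \<and> low n B s = x))"

lemma G_cong: "(\<forall>x k'. k' \<noteq> j \<longrightarrow> B' x k' = B x k') \<Longrightarrow> k < j \<Longrightarrow> G B' k = G B k"
proof -
  assume e: "\<forall>x k'. k' \<noteq> j \<longrightarrow> B' x k' = B x k'" and k: "k < j"
  have "s < j \<Longrightarrow> hom B' s = hom B s \<and> low n B' s = low n B s" for s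
    using col_eq[of B' s B] e by auto
  moreover have "B' x k = B x k" for x using e k by auto
  ultimately show ?thesis unfolding G_def using k by (metis order.strict_trans)
qed

lemma outer:
  "conmat_outer n \<sigma> P M B j B' \<Longrightarrow> wfm B \<Longrightarrow> 1 \<le> j \<Longrightarrow> (\<forall>k. 1 \<le> k \<longrightarrow> k < j \<longrightarrow> G B k) \<Longrightarrow>
     wfm B' \<and> (\<forall>k. 1 \<le> k \<longrightarrow> k \<le> n \<longrightarrow> G B' k)"
proof (induction rule: conmat_outer.induct)
  case (finished j B)
  then show ?case by auto
next
  case (process j B B1 B')
  note I = inner[OF process.hyps(2) process.prems(1) process.hyps(1)]
  have "G B1 k" if "1 \<le> k" "k < Suc j" for k
  proof (cases "k = j")
    case False
    then have "k < j" using that by auto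
    then show ?thesis using G_cong[of j B1 B k] I process.prems(3) that by auto
  next
    case True
    show ?thesis unfolding G_def True
    proof (intro allI impI)
      fix x assume b1: "B1 x j"
      then have "1 \<le> x" using I unfolding wfm_def by blast
      show "\<not>(\<exists>s. 1 \<le> s \<and> s < j \<and> hom B1 s \<and> low n B1 s = x)"
      proof (cases "x \<le> low n B j")
        case True
        then show ?thesis using I \<open>1 \<le> x\<close> b1 by auto
      next
        case False
        then have "B x j" using I b1 by auto
        then show ?thesis using wfm_entry_nz[OF process.prems(1)] False by blast
      qed
    qed
  qed
  then show ?case using process.IH I process.prems by auto
qed

lemma rep:
  "(col_add_step n)\<^sup>*\<^sup>* A B \<Longrightarrow> wfm A \<Longrightarrow>
    wfm B \<and> (\<forall>k. 1 \<le> k \<longrightarrow> k \<le> n \<longrightarrow> (\<exists>S. finite S \<and> k \<in> S \<and> S \<subseteq> {t. 1 \<le> t \<and> t \<le> k \<and> sm t k} \<and>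
       (\<forall>x. dg B k x = odd (card {t\<in>S. dg A t x}))))"
proof (induction rule: rtranclp_induct)
  case base
  show ?case
  proof (intro conjI allI impI)
    fix k assume k: "1 \<le> k" "k \<le> n"
    have "\<forall>x. dg A k x = odd (card {t\<in>{k}. dg A t x})"
    proof
      fix x show "dg A k x = odd (card {t\<in>{k}. dg A t x})"
      proof -
        have "{t\<in>{k}. dg A t x} = (if dg A k x then {k} else {})" by auto
        then show ?thesis by simp
      qed
    qed
    then show "\<exists>S. finite S \<and> k \<in> S \<and> S \<subseteq> {t. 1 \<le> t \<and> t \<le> k \<and> sm t k} \<and>
       (\<forall>x. dg A k x = odd (card {t\<in>S. dg A t x}))"
      using k sm_refl by (intro exI[of _ "{k}"]) auto
  qed (use base in auto)
next
  case (step B B')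
  then obtain s j where sj: "1 \<le> s" "s < j" "j \<le> n" and B': "B' = add_col B s j"
    by (auto simp: col_add_step_def)
  have IH: "wfm B" "\<forall>k. 1 \<le> k \<longrightarrow> k \<le> n \<longrightarrow> (\<exists>S. finite S \<and> k \<in> S \<and> S \<subseteq> {t. 1 \<le> t \<and> t \<le> k \<and> sm t k} \<and>
       (\<forall>x. dg B k x = odd (card {t\<in>S. dg A t x})))" using step by auto
  have w': "wfm B'" using wfm_add[OF IH(1) sj] B' by simp
  show ?case
  proof (intro conjI allI impI)
    fix k assume k: "1 \<le> k" "k \<le> n"
    show "\<exists>S. finite S \<and> k \<in> S \<and> S \<subseteq> {t. 1 \<le> t \<and> t \<le> k \<and> sm t k} \<and>
       (\<forall>x. dg B' k x = odd (card {t\<in>S. dg A t x}))"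
    proof (cases "k = j")
      case False
      then have "dg B' k x = dg B k x" for x by (simp add: B' add_col_def dg_def)
      then show ?thesis using IH(2) k by simp
    next
      case True
      have ej: "1 \<le> j" "j \<le> n" "1 \<le> s" "s \<le> n" using sj by auto
      from IH(2)[rule_format, OF ej(1,2)] obtain Sj where Sj: "finite Sj" "j \<in> Sj" "Sj \<subseteq> {t. 1 \<le> t \<and> t \<le> j \<and> sm t j}"
        "\<forall>x. dg B j x = odd (card {t\<in>Sj. dg A t x})" by blast
      from IH(2)[rule_format, OF ej(3,4)] obtain Ss where Ss: "finite Ss" "s \<in> Ss" "Ss \<subseteq> {t. 1 \<le> t \<and> t \<le> s \<and> sm t s}"
        "\<forall>x. dg B s x = odd (card {t\<in>Ss. dg A t x})" by blast
      show ?thesis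
      proof (cases "sm s j")
        case False
        have "dg B' j x = dg B j x" for x
        proof -
          have "\<not> (B x s \<and> sm x j)"
          proof
            assume a: "B x s \<and> sm x j"
            then have "1 \<le> x" "x < s" using IH(1) unfolding wfm_def by auto
            then show False using conv[of x s j] a sj False by auto
          qed
          then show ?thesis by (auto simp: B' add_col_def dg_def)
        qed
        then show ?thesis using Sj True by auto
      next
        case ssj: True
        have smx: "sm x j = sm x s" for x using ssj sm_trans sm_sym by blast
        have d: "dg B' j x = (dg B j x \<noteq> dg B s x)" for x
          by (auto simp: B' add_col_def dg_def smx)
        show ?thesis
        proof (intro exI[of _ "(Sj - Ss) \<union> (Ss - Sj)"] conjI allI)
          show "finite (Sj - Ss \<union> (Ss - Sj))" using Sj Ss by auto
          show "k \<in> Sj - Ss \<union> (Ss - Sj)" using True Sj Ss sj by auto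
          show "Sj - Ss \<union> (Ss - Sj) \<subseteq> {t. 1 \<le> t \<and> t \<le> k \<and> sm t k}"
          proof
            fix t assume "t \<in> Sj - Ss \<union> (Ss - Sj)"
            then have "t \<in> Sj \<or> t \<in> Ss" by blast
            then show "t \<in> {t. 1 \<le> t \<and> t \<le> k \<and> sm t k}"
            proof
              assume "t \<in> Sj" then show ?thesis using Sj(3) True by blast
            next
              assume "t \<in> Ss" then have "1 \<le> t" "t \<le> s" "sm t s" using Ss(3) by auto
              then show ?thesis using smx[of t] True sj by auto
            qed
          qed
          fix x show "dg B' k x = odd (card {t \<in> Sj - Ss \<union> (Ss - Sj). dg A t x})"
            unfolding parity_symdiff[OF Sj(1) Ss(1)] True d using Sj(4) Ss(4) by simp
        qed
      qed
    qed
  qed (use w' in auto)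
qed

lemma final:
  assumes wA: "wfm A" and wR: "wfm R" and GA: "\<forall>k. 1 \<le> k \<longrightarrow> k \<le> n \<longrightarrow> G A k"
    and red: "reduced n R"
    and rp: "\<forall>k. 1 \<le> k \<longrightarrow> k \<le> n \<longrightarrow> (\<exists>S. finite S \<and> k \<in> S \<and> S \<subseteq> {t. 1 \<le> t \<and> t \<le> k \<and> sm t k} \<and>
       (\<forall>x. dg R k x = odd (card {t\<in>S. dg A t x})))"
  shows "1 \<le> k \<Longrightarrow> k \<le> n \<Longrightarrow> (hom A k = hom R k) \<and> (hom A k \<longrightarrow> low n R k = low n A k)"
proof (induction k rule: less_induct)
  case (less k)
  have dred: "t \<noteq> k' \<Longrightarrow> sm t k' \<Longrightarrow> hom A t \<Longrightarrow> hom A k' \<Longrightarrow> 1 \<le> t \<Longrightarrow> t \<le> n \<Longrightarrow> 1 \<le> k' \<Longrightarrow> k' \<le> n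
      \<Longrightarrow> low n A t \<noteq> low n A k'" for t k'
  proof -
    have one: "low n A t \<noteq> low n A k'" if "t < k'" "hom A t" "hom A k'" "1 \<le> t" "1 \<le> k'" "k' \<le> n" for t k'
    proof
      assume e: "low n A t = low n A k'"
      have "A (low n A k') k'" using that low_props by (auto simp: homogeneous_def)
      then show False using GA that e unfolding G_def by blast
    qed
    assume "t \<noteq> k'" "sm t k'" "hom A t" "hom A k'" "1 \<le> t" "t \<le> n" "1 \<le> k'" "k' \<le> n"
    then show ?thesis
    proof (cases "t < k'")
      case True
      then show ?thesis using one[of t k'] \<open>hom A t\<close> \<open>hom A k'\<close> \<open>1 \<le> t\<close> \<open>1 \<le> k'\<close> \<open>k' \<le> n\<close> by blast
    next
      case False
      then have "k' < t" using \<open>t \<noteq> k'\<close> by simp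
      then show ?thesis using one[of k' t] \<open>hom A t\<close> \<open>hom A k'\<close> \<open>1 \<le> t\<close> \<open>1 \<le> k'\<close> \<open>t \<le> n\<close> by metis
    qed
  qed
  obtain S where S: "finite S" "k \<in> S" "S \<subseteq> {t. 1 \<le> t \<and> t \<le> k \<and> sm t k}"
    "\<forall>x. dg R k x = odd (card {t\<in>S. dg A t x})" using rp[rule_format, OF less.prems] by blast
  define H where "H = {t\<in>S. hom A t}"
  have fH: "finite H" using S(1) by (simp add: H_def)
  show ?case
  proof (cases "H = {}")
    case True
    then have nd: "\<not> dg A t x" if "t \<in> S" for t x using hom_iff[OF wA] that by (auto simp: H_def)
    have "\<not> dg R k x" for x
    proof -
      have e: "{t\<in>S. dg A t x} = {}" using nd by blast
      show ?thesis using S(4)[rule_format, of x] unfolding e by simp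
    qed
    then have "\<not> hom R k" using hom_iff[OF wR] by auto
    moreover have "\<not> hom A k" using True S(2) by (auto simp: H_def)
    ultimately show ?thesis by auto
  next
    case False
    define m where "m = Max (low n A ` H)"
    have "m \<in> low n A ` H" unfolding m_def using fH False by (intro Max_in) auto
    then obtain t0 where t0: "t0 \<in> H" "low n A t0 = m" by auto
    have mge: "t \<in> H \<Longrightarrow> low n A t \<le> m" for t unfolding m_def using fH by auto
    have t0S: "t0 \<in> S" "hom A t0" using t0 by (auto simp: H_def)
    have t0r: "1 \<le> t0" "t0 \<le> k" "sm t0 k" using S(3) t0S by auto
    have single: "{t\<in>S. dg A t m} = {t0}"
    proof (intro equalityI subsetI)
      fix t assume "t \<in> {t\<in>S. dg A t m}"
      then have tS: "t \<in> S" and d: "dg A t m" by auto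
      then have ht: "hom A t" using hom_iff[OF wA] by auto
      then have "t \<in> H" using tS by (auto simp: H_def)
      then have "low n A t = m" using mge hom_low[OF wA ht] d by (meson le_antisym)
      moreover have "1 \<le> t" "t \<le> k" "sm t k" using S(3) tS by auto
      ultimately have lt: "low n A t = low n A t0" "1 \<le> t" "t \<le> n" "sm t t0" "t0 \<le> n"
      proof -
        assume a: "low n A t = m" "1 \<le> t" "t \<le> k" "sm t k"
        show "low n A t = low n A t0" using a(1) t0(2) by simp
        show "1 \<le> t" by (rule a(2))
        show "t \<le> n" using a(3) less.prems(2) by linarith
        show "sm t t0" using sm_trans[OF a(4) sm_sym[OF t0r(3)]] .
        show "t0 \<le> n" using t0r(2) less.prems(2) by linarith
      qed
      show "t \<in> {t0}"
      proof (rule ccontr)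
        assume "t \<notin> {t0}"
        then have "t \<noteq> t0" by simp
        from dred[OF this lt(4) ht t0S(2) lt(2) lt(3) t0r(1) lt(5)] lt(1) show False by simp
      qed
    next
      fix t assume "t \<in> {t0}"
      then show "t \<in> {t\<in>S. dg A t m}" using t0S hom_low[OF wA] t0 by auto
    qed
    have dRm: "dg R k m" using S(4) single by simp
    then have hR: "hom R k" using hom_iff[OF wR] by auto
    have "m \<le> low n R k" using hom_low[OF wR hR] dRm by auto
    moreover have "low n R k \<le> m"
    proof -
      have "dg R k (low n R k)" using hom_low[OF wR hR] by auto
      then have od: "odd (card {t\<in>S. dg A t (low n R k)})" using S(4) by blast
      have "{t\<in>S. dg A t (low n R k)} \<noteq> {}"
      proof
        assume "{t\<in>S. dg A t (low n R k)} = {}"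
        then show False using od by (metis card.empty even_zero)
      qed
      then obtain t where "t \<in> S" "dg A t (low n R k)" by auto
      moreover then have "hom A t" using hom_iff[OF wA] by auto
      ultimately have "t \<in> H" "low n R k \<le> low n A t" using hom_low[OF wA] by (auto simp: H_def)
      then show ?thesis using mge[of t] by simp
    qed
    ultimately have lR: "low n R k = m" by auto
    have "t0 = k"
    proof (rule ccontr)
      assume ne: "t0 \<noteq> k"
      then have "t0 < k" using t0r by auto
      have ih: "(hom A t0 = hom R t0) \<and> (hom A t0 \<longrightarrow> low n R t0 = low n A t0)"
        using less.IH[OF \<open>t0 < k\<close> t0r(1)] \<open>t0 < k\<close> less.prems(2) by linarith
      then have "hom R t0" "low n R t0 = m" using t0S(2) t0(2) by auto
      moreover have "nonzero_col n R t0" "nonzero_col n R k" using hR \<open>hom R t0\<close>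
        by (auto simp: homogeneous_def)
      moreover have "t0 \<in> {1..n}" "k \<in> {1..n}" using t0r less.prems by auto
      ultimately show False using red ne lR unfolding reduced_def by metis
    qed
    then show ?thesis using t0S lR t0 hR by auto
  qed
qed

end

theorem proposition3:
  fixes K :: "'v set set" and \<V> :: "'v set set set"
    and P :: "'p set" and le :: "'p \<Rightarrow> 'p \<Rightarrow> bool" and M :: "'p \<Rightarrow> 'v set set"
    and n :: nat and \<sigma> :: "nat \<Rightarrow> 'v set" and Aout Abar :: z2mat
  assumes "simplicial_complex K"
    and "multivector_field K \<V>"
    and "morse_decomposition K \<V> P le M"
    and "admissible_enumeration K P le M n \<sigma>"
    and "conmat_reduction n \<sigma> P M (boundary_matrix n \<sigma>) Aout"
    and "complete_column_reduction n Aout Abar"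
    and "j \<in> {1..n}"
  shows "homogeneous n \<sigma> P M Aout j \<longleftrightarrow> homogeneous n \<sigma> P M Abar j"
proof -
  from assms(4) have bij: "bij_betw \<sigma> {1..n} K"
    and sub: "\<forall>i\<in>{1..n}. \<forall>j\<in>{1..n}. \<sigma> i \<subset> \<sigma> j \<longrightarrow> i < j"
    unfolding admissible_enumeration_def by auto
  from assms(4) obtain lin where lin: "linear_extension P le lin"
    and linc: "\<forall>i\<in>{1..n}. \<forall>j\<in>{1..n}. \<forall>p\<in>P. \<forall>q\<in>P. i \<le> j \<and> \<sigma> i \<in> M p \<and> \<sigma> j \<in> M q \<longrightarrow> lin p q"
    unfolding admissible_enumeration_def by blast
  from assms(3) have cov: "(\<Union>p\<in>P. M p) = K" and dj: "\<forall>p\<in>P. \<forall>q\<in>P. p \<noteq> q \<longrightarrow> M p \<inter> M q = {}"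
    unfolding morse_decomposition_def by auto
  have antis: "\<forall>p\<in>P. \<forall>q\<in>P. lin p q \<and> lin q p \<longrightarrow> p = q"
    using lin unfolding linear_extension_def partial_order_on'_def by blast
  have cover: "\<exists>p\<in>P. \<sigma> i \<in> M p" if "1 \<le> i" "i \<le> n" for i
  proof -
    have "\<sigma> i \<in> K" using bij that by (auto simp: bij_betw_def)
    then show ?thesis using cov by auto
  qed
  interpret msetup n \<sigma> P M
  proof
    fix i m k assume a: "i \<le> m" "m \<le> k" "1 \<le> i" "k \<le> n" "same \<sigma> P M i k"
    then obtain p where p: "p \<in> P" "\<sigma> i \<in> M p" "\<sigma> k \<in> M p" by (auto simp: same_def)
    obtain q where q: "q \<in> P" "\<sigma> m \<in> M q" using cover[of m] a by auto
    have r: "i \<in> {1..n}" "m \<in> {1..n}" "k \<in> {1..n}" using a by auto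
    have "lin p q" using linc r(1,2) a(1) p q by blast
    moreover have "lin q p" using linc r(2,3) a(2) p q by blast
    ultimately have "p = q" using antis p q by auto
    then show "same \<sigma> P M m k" using p q by (auto simp: same_def)
  qed (use cover dj in auto)
  have wA: "wfm (boundary_matrix n \<sigma>)"
    unfolding wfm_def boundary_matrix_def codim1_face_def
  proof (intro allI impI)
    fix x k assume a: "x \<in> {1..n} \<and> k \<in> {1..n} \<and> \<sigma> x \<subseteq> \<sigma> k \<and> card (\<sigma> k) = card (\<sigma> x) + 1"
    then have "\<sigma> x \<subset> \<sigma> k" by auto
    then show "1 \<le> x \<and> x < k \<and> k \<le> n" using sub a by auto
  qed
  have o: "wfm Aout \<and> (\<forall>k. 1 \<le> k \<longrightarrow> k \<le> n \<longrightarrow> G Aout k)"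
    using outer[OF assms(5)[unfolded conmat_reduction_def] wA] by auto
  have r: "wfm Abar \<and> (\<forall>k. 1 \<le> k \<longrightarrow> k \<le> n \<longrightarrow> (\<exists>S. finite S \<and> k \<in> S \<and> S \<subseteq> {t. 1 \<le> t \<and> t \<le> k \<and> sm t k} \<and>
       (\<forall>x. dg Abar k x = odd (card {t\<in>S. dg Aout t x}))))"
    using rep assms(6) o unfolding complete_column_reduction_def by blast
  have red: "reduced n Abar" using assms(6) unfolding complete_column_reduction_def by auto
  show ?thesis using final[of Aout Abar j] o r red assms(7) by auto
qed

end
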